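(* Let $p=2$ and assume $\mu^1,\dots,\mu^N$ are not all equal. Let $\tilde\nu=\sum_{i=1}^N\lambda_i\sum_{k=1}^{n_i}\mu^i_k\delta(m^i_k)$ be the output of the pairwise algorithm, where $$m^i_k=\sum_{j=1}^N\lambda_j\sum_{l=1}^{n_j}\frac{\pi^{ij}_{k,l}}{\mu^i_k}x^j_l.$$ Then for any optimal barycenter $\hat\nu$ (minimizer of $\Psi_2$), $$\frac{\Psi_2(\tilde\nu)}{\Psi_2(\hat\nu)}\le2-\frac{\sum_{i=1}^N\lambda_i\sum_{k=1}^{n_i}\mu^i_k\|m^i_k-x^i_k\|^2}{\sum_{1\le i<j\le N}\lambda_i\lambda_j\mathcal{W}_2^2(\mu^i,\mu^j)}.$$
   Context: $\|\cdot\|$ is the Euclidean norm on $\mathbb{R}^d$. For finitely supported probability measures $\mu,\nu$ on $\mathbb{R}^d$, $\mathcal{W}_2^2(\mu,\nu)\coloneqq\min_{\pi\in\Pi(\mu,\nu)}\int\|x-y\|^2\,d\pi$, with $\Pi(\mu,\nu)$ the set of couplings. Fix $N\ge2$, $\lambda\in\Delta_N\coloneqq\{\lambda\in(0,1)^N:\sum_i\lambda_i=1\}$, and discrete probability measures $\mu^i=\sum_{l=1}^{n_i}\mu^i_l\delta(x^i_l)$, $i=1,\dots,N$, with positive weights and pairwise distinct points for each $i$. $\Psi_2(\nu)\coloneqq\sum_{i=1}^N\lambda_i\mathcal{W}_2^2(\nu,\mu^i)$. Plans of the pairwise algorithm: $\pi^{ii}\coloneqq\sum_k\mu^i_k\delta(x^i_k,x^i_k)$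 (so $\pi^{ii}_{k,l}=\mu^i_k$ if $l=k$, else $0$); for $i<j$, $\pi^{ij}=\sum_{k,l}\pi^{ij}_{k,l}\delta(x^i_k,x^j_l)\in\Pi(\mu^i,\mu^j)$ is an optimal plan for the cost $\|x-y\|^2$; and $\pi^{ji}_{l,k}\coloneqq\pi^{ij}_{k,l}$. *)

theory Defs
  imports "HOL-Analysis.Analysis"
begin

text \<open>Finitely supported (discrete) measures on a Euclidean space are represented
  by their mass functions 'a \<Rightarrow> real; support = points of nonzero mass.\<close>

definition supp_m :: "('b \<Rightarrow> real) \<Rightarrow> 'b set" where
  "supp_m f = {y. f y \<noteq> 0}"

definition fsprob :: "('a \<Rightarrow> real) \<Rightarrow> bool" where
  "fsprob \<nu> \<longleftrightarrow> finite (supp_m \<nu>) \<and> (\<forall>y. \<nu> y \<ge> 0) \<and> sum \<nu> (supp_m \<nu>) = 1"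

definition coupling :: "('a \<Rightarrow> real) \<Rightarrow> ('a \<Rightarrow> real) \<Rightarrow> ('a \<times> 'a \<Rightarrow> real) \<Rightarrow> bool" where
  "coupling \<mu> \<nu> \<pi> \<longleftrightarrow> (\<forall>p. \<pi> p \<ge> 0) \<and> finite (supp_m \<pi>)
     \<and> (\<forall>x y. \<pi> (x, y) \<noteq> 0 \<longrightarrow> \<mu> x \<noteq> 0 \<and> \<nu> y \<noteq> 0)
     \<and> (\<forall>x. (\<Sum>y\<in>supp_m \<nu>. \<pi> (x, y)) = \<mu> x)
     \<and> (\<forall>y. (\<Sum>x\<in>supp_m \<mu>. \<pi> (x, y)) = \<nu> y)"

definition transport_cost :: "('a::real_normed_vector \<times> 'a \<Rightarrow> real) \<Rightarrow> real" where
  "transport_cost \<pi> = (\<Sum>p\<in>supp_m \<pi>. \<pi> p * (norm (fst p - snd p))\<^sup>2)"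

definition W2sq :: "('a::real_normed_vector \<Rightarrow> real) \<Rightarrow> ('a \<Rightarrow> real) \<Rightarrow> real" where
  "W2sq \<mu> \<nu> = Inf {transport_cost \<pi> | \<pi>. coupling \<mu> \<nu> \<pi>}"

definition dmeas :: "nat \<Rightarrow> (nat \<Rightarrow> real) \<Rightarrow> (nat \<Rightarrow> 'a) \<Rightarrow> ('a \<Rightarrow> real)" where
  "dmeas n w x = (\<lambda>y. \<Sum>l<n. if x l = y then w l else 0)"

definition Psi2 :: "nat \<Rightarrow> (nat \<Rightarrow> real) \<Rightarrow> (nat \<Rightarrow> nat) \<Rightarrow> (nat \<Rightarrow> nat \<Rightarrow> real)
    \<Rightarrow> (nat \<Rightarrow> nat \<Rightarrow> 'a::real_normed_vector) \<Rightarrow> ('a \<Rightarrow> real) \<Rightarrow> real" where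
  "Psi2 N lam n w x \<nu> = (\<Sum>i<N. lam i * W2sq \<nu> (dmeas (n i) (w i) (x i)))"

end

theory Submission
  imports Defs
begin


lemma supp_push_sub: "supp_m (\<lambda>y. \<Sum>t\<in>I. if h t = y then (c t::real) else 0) \<subseteq> h ` I"
proof
  fix y assume "y \<in> supp_m (\<lambda>y. \<Sum>t\<in>I. if h t = y then c t else 0)"
  hence ne: "(\<Sum>t\<in>I. if h t = y then c t else 0) \<noteq> 0" by (simp add: supp_m_def)
  have "\<exists>t\<in>I. h t = y"
  proof (rule ccontr)
    assume "\<not> (\<exists>t\<in>I. h t = y)"
    hence "(\<Sum>t\<in>I. if h t = y then c t else 0) = 0" by (intro sum.neutral) auto
    thus False using ne by simp
  qed
  thus "y \<in> h ` I" by (auto simp: image_iff)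
qed

lemma push_coupling:
  fixes I :: "'i set" and c :: "'i \<Rightarrow> real" and f g :: "'i \<Rightarrow> 'a::real_normed_vector"
  assumes fin: "finite I" and cnn: "\<forall>t\<in>I. c t \<ge> 0"
  shows "coupling (\<lambda>y. \<Sum>t\<in>I. if f t = y then c t else 0)
                  (\<lambda>z. \<Sum>t\<in>I. if g t = z then c t else 0)
                  (\<lambda>p. \<Sum>t\<in>I. if (f t, g t) = p then c t else 0)
       \<and> transport_cost (\<lambda>p. \<Sum>t\<in>I. if (f t, g t) = p then c t else 0)
           = (\<Sum>t\<in>I. c t * (norm (f t - g t))\<^sup>2)"
proof -
  define \<mu> where "\<mu> = (\<lambda>y. \<Sum>t\<in>I. if f t = y then c t else 0)"
  define \<nu> where "\<nu> = (\<lambda>z. \<Sum>t\<in>I. if g t = z then c t else 0)"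
  define \<pi> where "\<pi> = (\<lambda>p. \<Sum>t\<in>I. if (f t, g t) = p then c t else 0)"
  have pinn: "\<forall>p. \<pi> p \<ge> 0" unfolding \<pi>_def by (intro allI sum_nonneg) (simp add: cnn)
  have pge: "\<pi> (f t, g t) \<ge> c t" if "t \<in> I" for t
  proof -
    have "(\<lambda>s. if (f s, g s) = (f t, g t) then c s else 0) t \<le> (\<Sum>s\<in>I. if (f s, g s) = (f t, g t) then c s else 0)"
      by (rule member_le_sum[OF that _ fin]) (simp add: cnn)
    thus ?thesis unfolding \<pi>_def by (simp only: simp_thms if_True)
  qed
  have mge: "\<mu> (f t) \<ge> c t" if "t \<in> I" for t
  proof -
    have "(\<lambda>s. if f s = f t then c s else 0) t \<le> (\<Sum>s\<in>I. if f s = f t then c s else 0)"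
      by (rule member_le_sum[OF that _ fin]) (simp add: cnn)
    thus ?thesis unfolding \<mu>_def by (simp only: simp_thms if_True)
  qed
  have nge: "\<nu> (g t) \<ge> c t" if "t \<in> I" for t
  proof -
    have "(\<lambda>s. if g s = g t then c s else 0) t \<le> (\<Sum>s\<in>I. if g s = g t then c s else 0)"
      by (rule member_le_sum[OF that _ fin]) (simp add: cnn)
    thus ?thesis unfolding \<nu>_def by (simp only: simp_thms if_True)
  qed
  have suppsub: "supp_m \<pi> \<subseteq> (\<lambda>t. (f t, g t)) ` I"
  proof
    fix p assume "p \<in> supp_m \<pi>"
    hence "\<pi> p \<noteq> 0" by (simp add: supp_m_def)
    have "\<exists>t\<in>I. (f t, g t) = p"
    proof (rule ccontr)
      assume "\<not> (\<exists>t\<in>I. (f t, g t) = p)"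
      hence "\<pi> p = 0" unfolding \<pi>_def by (intro sum.neutral) auto
      thus False using \<open>\<pi> p \<noteq> 0\<close> by simp
    qed
    thus "p \<in> (\<lambda>t. (f t, g t)) ` I" by (auto simp: image_iff)
  qed
  have finp: "finite (supp_m \<pi>)" using suppsub fin finite_subset by blast
  have finm: "finite (supp_m \<mu>)" unfolding \<mu>_def by (rule finite_subset[OF supp_push_sub finite_imageI[OF fin]])
  have finn: "finite (supp_m \<nu>)" unfolding \<nu>_def by (rule finite_subset[OF supp_push_sub finite_imageI[OF fin]])
  have le1: "\<pi> (a, b) \<le> \<mu> a" for a b unfolding \<pi>_def \<mu>_def
    by (rule sum_mono) (use cnn in auto)
  have le2: "\<pi> (a, b) \<le> \<nu> b" for a b unfolding \<pi>_def \<nu>_def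
    by (rule sum_mono) (use cnn in auto)
  have nz: "\<mu> a \<noteq> 0 \<and> \<nu> b \<noteq> 0" if "\<pi> (a, b) \<noteq> 0" for a b
  proof -
    have "0 < \<pi> (a, b)" using pinn that by (metis order_le_less)
    hence "0 < \<mu> a" "0 < \<nu> b" using le1[of a b] le2[of a b] by linarith+
    thus ?thesis by simp
  qed
  have marg1: "(\<Sum>b\<in>supp_m \<nu>. \<pi> (a, b)) = \<mu> a" for a
  proof -
    have "(\<Sum>b\<in>supp_m \<nu>. \<pi> (a, b)) = (\<Sum>t\<in>I. \<Sum>b\<in>supp_m \<nu>. if (f t, g t) = (a, b) then c t else 0)"
      unfolding \<pi>_def by (rule sum.swap)
    also have "\<dots> = (\<Sum>t\<in>I. if f t = a then c t else 0)"
    proof (rule sum.cong[OF refl])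
      fix t assume t: "t \<in> I"
      show "(\<Sum>b\<in>supp_m \<nu>. if (f t, g t) = (a, b) then c t else 0) = (if f t = a then c t else 0)"
      proof (cases "c t = 0")
        case True then show ?thesis by (simp add: sum.neutral)
      next
        case False
        hence "g t \<in> supp_m \<nu>" using nge[OF t] cnn t by (auto simp: supp_m_def)
        thus ?thesis using finm finn by (simp add: sum.delta')
      qed
    qed
    finally show ?thesis unfolding \<mu>_def .
  qed
  have marg2: "(\<Sum>a\<in>supp_m \<mu>. \<pi> (a, b)) = \<nu> b" for b
  proof -
    have "(\<Sum>a\<in>supp_m \<mu>. \<pi> (a, b)) = (\<Sum>t\<in>I. \<Sum>a\<in>supp_m \<mu>. if (f t, g t) = (a, b) then c t else 0)"
      unfolding \<pi>_def by (rule sum.swap)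
    also have "\<dots> = (\<Sum>t\<in>I. if g t = b then c t else 0)"
    proof (rule sum.cong[OF refl])
      fix t assume t: "t \<in> I"
      show "(\<Sum>a\<in>supp_m \<mu>. if (f t, g t) = (a, b) then c t else 0) = (if g t = b then c t else 0)"
      proof (cases "c t = 0")
        case True then show ?thesis by (simp add: sum.neutral)
      next
        case False
        hence "f t \<in> supp_m \<mu>" using mge[OF t] cnn t by (auto simp: supp_m_def)
        thus ?thesis using finm finn by (simp add: sum.delta')
      qed
    qed
    finally show ?thesis unfolding \<nu>_def .
  qed
  have cost: "transport_cost \<pi> = (\<Sum>t\<in>I. c t * (norm (f t - g t))\<^sup>2)"
  proof -
    have "transport_cost \<pi> = (\<Sum>p\<in>supp_m \<pi>. \<Sum>t\<in>I. (if (f t, g t) = p then c t else 0) * (norm (fst p - snd p))\<^sup>2)"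
      unfolding transport_cost_def \<pi>_def by (simp add: sum_distrib_right)
    also have "\<dots> = (\<Sum>t\<in>I. \<Sum>p\<in>supp_m \<pi>. (if (f t, g t) = p then c t else 0) * (norm (fst p - snd p))\<^sup>2)"
      by (rule sum.swap)
    also have "\<dots> = (\<Sum>t\<in>I. c t * (norm (f t - g t))\<^sup>2)"
    proof (rule sum.cong[OF refl])
      fix t assume t: "t \<in> I"
      show "(\<Sum>p\<in>supp_m \<pi>. (if (f t, g t) = p then c t else 0) * (norm (fst p - snd p))\<^sup>2) = c t * (norm (f t - g t))\<^sup>2"
      proof (cases "c t = 0")
        case True then show ?thesis by (simp add: sum.neutral)
      next
        case False
        hence "(f t, g t) \<in> supp_m \<pi>" using pge[OF t] cnn t by (auto simp: supp_m_def)
        have "(\<Sum>p\<in>supp_m \<pi>. (if (f t, g t) = p then c t else 0) * (norm (fst p - snd p))\<^sup>2)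
           = (\<Sum>p\<in>supp_m \<pi>. if (f t, g t) = p then c t * (norm (fst p - snd p))\<^sup>2 else 0)"
          by (rule sum.cong) auto
        also have "\<dots> = c t * (norm (f t - g t))\<^sup>2"
          using finp \<open>(f t, g t) \<in> supp_m \<pi>\<close> by (simp add: sum.delta')
        finally show ?thesis .
      qed
    qed
    finally show ?thesis .
  qed
  have "coupling \<mu> \<nu> \<pi>" unfolding coupling_def using pinn finp nz marg1 marg2 by blast
  thus ?thesis using cost unfolding \<mu>_def \<nu>_def \<pi>_def by blast
qed

lemma cost_nonneg: "coupling \<mu> \<nu> \<pi> \<Longrightarrow> 0 \<le> transport_cost \<pi>"
  unfolding coupling_def transport_cost_def by (auto intro!: sum_nonneg)

lemma W2sq_le: "coupling \<mu> \<nu> \<pi> \<Longrightarrow> W2sq \<mu> \<nu> \<le> transport_cost \<pi>"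
  unfolding W2sq_def
  by (rule cInf_lower) (auto simp: bdd_below_def intro: cost_nonneg)

lemma W2sq_nonneg: "coupling \<mu> \<nu> \<pi> \<Longrightarrow> 0 \<le> W2sq \<mu> \<nu>"
  unfolding W2sq_def
  by (rule cInf_greatest) (auto intro: cost_nonneg)

lemma W2sq_approx:
  assumes "coupling \<mu> \<nu> \<pi>" "e > 0"
  shows "\<exists>\<pi>'. coupling \<mu> \<nu> \<pi>' \<and> transport_cost \<pi>' < W2sq \<mu> \<nu> + e"
proof -
  have "{transport_cost \<pi> | \<pi>. coupling \<mu> \<nu> \<pi>} \<noteq> {}" using assms by blast
  from cInf_lessD[OF this, of "W2sq \<mu> \<nu> + e"] show ?thesis
    using assms unfolding W2sq_def by auto
qed

lemma cost_rewrite: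
  assumes "coupling \<mu> \<nu> \<pi>" "finite A" "finite B" "supp_m \<mu> \<subseteq> A" "supp_m \<nu> \<subseteq> B"
  shows "transport_cost \<pi> = (\<Sum>a\<in>A. \<Sum>b\<in>B. \<pi> (a, b) * (norm (a - b))\<^sup>2)"
proof -
  have sub: "supp_m \<pi> \<subseteq> A \<times> B" using assms unfolding coupling_def supp_m_def by auto
  have "transport_cost \<pi> = (\<Sum>p\<in>A \<times> B. \<pi> p * (norm (fst p - snd p))\<^sup>2)"
    unfolding transport_cost_def
    by (rule sum.mono_neutral_left) (use sub assms(2,3) in \<open>auto simp: supp_m_def\<close>)
  also have "\<dots> = (\<Sum>a\<in>A. \<Sum>b\<in>B. \<pi> (a, b) * (norm (a - b))\<^sup>2)"
    unfolding sum.cartesian_product by (rule sum.cong) auto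
  finally show ?thesis .
qed



lemma var_id:
  fixes r :: "'i \<Rightarrow> real" and y :: "'i \<Rightarrow> 'a::real_inner"
  assumes fin: "finite T" and rs: "(\<Sum>t\<in>T. r t) = W" and rm: "(\<Sum>t\<in>T. r t *\<^sub>R y t) = W *\<^sub>R m"
  shows "(\<Sum>t\<in>T. r t * (norm (m - y t))\<^sup>2)
       = (\<Sum>t\<in>T. r t * (norm (z - y t))\<^sup>2) - W * (norm (m - z))\<^sup>2"
proof -
  have e: "(norm (m - y t))\<^sup>2 = (norm (z - y t))\<^sup>2 + 2 * ((z - y t) \<bullet> (m - z)) + (norm (m - z))\<^sup>2" for t
  proof -
    show ?thesis by (simp add: power2_norm_eq_inner inner_diff_left inner_diff_right inner_commute algebra_simps)
  qed
  have s1: "(\<Sum>t\<in>T. r t * ((z - y t) \<bullet> (m - z))) = (\<Sum>t\<in>T. r t *\<^sub>R (z - y t)) \<bullet> (m - z)"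
    by (simp add: inner_sum_left)
  have s2: "(\<Sum>t\<in>T. r t *\<^sub>R (z - y t)) = W *\<^sub>R z - W *\<^sub>R m"
    by (simp add: scaleR_right_diff_distrib sum_subtractf rm rs flip: scaleR_left.sum)
  have s3: "(W *\<^sub>R z - W *\<^sub>R m) \<bullet> (m - z) = - W * (norm (m - z))\<^sup>2"
  proof -
    have "W *\<^sub>R z - W *\<^sub>R m = (- W) *\<^sub>R (m - z)" by (simp add: algebra_simps)
    thus ?thesis by (simp add: power2_norm_eq_inner)
  qed
  have "(\<Sum>t\<in>T. r t * (norm (m - y t))\<^sup>2)
      = (\<Sum>t\<in>T. r t * (norm (z - y t))\<^sup>2 + 2 * (r t * ((z - y t) \<bullet> (m - z))) + r t * (norm (m - z))\<^sup>2)"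
    by (rule sum.cong) (simp_all add: e algebra_simps)
  also have "\<dots> = (\<Sum>t\<in>T. r t * (norm (z - y t))\<^sup>2) + 2 * (\<Sum>t\<in>T. r t * ((z - y t) \<bullet> (m - z)))
       + (\<Sum>t\<in>T. r t) * (norm (m - z))\<^sup>2"
    by (simp add: sum.distrib sum_distrib_left sum_distrib_right)
  also have "\<dots> = (\<Sum>t\<in>T. r t * (norm (z - y t))\<^sup>2) - W * (norm (m - z))\<^sup>2"
    using s1 s2 s3 rs by simp
  finally show ?thesis .
qed



lemma sq_split: "(norm (a - b))\<^sup>2 = (norm (a - y))\<^sup>2 + (norm (b - y))\<^sup>2 - 2 * ((a - y) \<bullet> (b - y))"
  for a b y :: "'a::real_inner"
  by (simp add: power2_norm_eq_inner inner_diff_left inner_diff_right inner_commute algebra_simps)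

lemma half_sum_le:
  fixes T :: "nat \<Rightarrow> nat \<Rightarrow> real"
  assumes nn: "\<forall>i<N. \<forall>j<N. T i j \<ge> 0" and sym: "\<forall>i<N. \<forall>j<N. T i j = T j i"
  shows "2 * (\<Sum>i<N. \<Sum>j<N. if i < j then T i j else 0) \<le> (\<Sum>i<N. \<Sum>j<N. T i j)"
proof -
  have R: "(\<Sum>i<N. \<Sum>j<N. if j < i then T i j else 0) = (\<Sum>i<N. \<Sum>j<N. if i < j then T i j else 0)"
  proof -
    have "(\<Sum>i<N. \<Sum>j<N. if j < i then T i j else 0) = (\<Sum>j<N. \<Sum>i<N. if j < i then T i j else 0)"
      by (rule sum.swap)
    also have "\<dots> = (\<Sum>i<N. \<Sum>j<N. if i < j then T i j else 0)"
      by (rule sum.cong[OF refl], rule sum.cong[OF refl]) (use sym in auto)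
    finally show ?thesis .
  qed
  have "(\<Sum>i<N. \<Sum>j<N. if i < j then T i j else 0) + (\<Sum>i<N. \<Sum>j<N. if j < i then T i j else 0)
      = (\<Sum>i<N. \<Sum>j<N. (if i < j then T i j else 0) + (if j < i then T i j else 0))"
    by (simp add: sum.distrib)
  also have "\<dots> \<le> (\<Sum>i<N. \<Sum>j<N. T i j)"
    by (rule sum_mono, rule sum_mono) (use nn in auto)
  finally show ?thesis using R by simp
qed

lemma pair_bound:
  fixes A :: "nat \<Rightarrow> 'a::real_inner set" and q :: "nat \<Rightarrow> 'a \<Rightarrow> real" and lam :: "nat \<Rightarrow> real"
  assumes fin: "\<forall>i<N. finite (A i)" and qnn: "\<forall>i<N. \<forall>a\<in>A i. q i a \<ge> 0"
    and qs: "\<forall>i<N. (\<Sum>a\<in>A i. q i a) = 1" and lnn: "\<forall>i<N. lam i \<ge> 0" and ls: "(\<Sum>i<N. lam i) = 1"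
  shows "(\<Sum>i<N. \<Sum>j<N. if i < j then lam i * lam j * (\<Sum>a\<in>A i. \<Sum>b\<in>A j. q i a * q j b * (norm (a - b))\<^sup>2) else 0)
     \<le> (\<Sum>i<N. lam i * (\<Sum>a\<in>A i. q i a * (norm (y - a))\<^sup>2))"
proof -
  define e where "e i = (\<Sum>a\<in>A i. q i a * (norm (a - y))\<^sup>2)" for i
  define v where "v i = (\<Sum>a\<in>A i. q i a *\<^sub>R (a - y))" for i
  define D where "D i j = (\<Sum>a\<in>A i. \<Sum>b\<in>A j. q i a * q j b * (norm (a - b))\<^sup>2)" for i j
  define T where "T i j = lam i * lam j * D i j" for i j
  have Dexp: "D i j = e i + e j - 2 * (v i \<bullet> v j)" if "i < N" "j < N" for i j
  proof -
    have "D i j = (\<Sum>a\<in>A i. \<Sum>b\<in>A j. q i a * q j b * (norm (a - y))\<^sup>2 + q i a * q j b * (norm (b - y))\<^sup>2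
                     - 2 * ((q i a *\<^sub>R (a - y)) \<bullet> (q j b *\<^sub>R (b - y))))"
      unfolding D_def by (rule sum.cong[OF refl], rule sum.cong[OF refl]) (subst sq_split[where y=y], simp add: algebra_simps)
    also have "\<dots> = (\<Sum>a\<in>A i. q i a * (norm (a - y))\<^sup>2 * (\<Sum>b\<in>A j. q j b)) + (\<Sum>a\<in>A i. q i a * (\<Sum>b\<in>A j. q j b * (norm (b - y))\<^sup>2))
          - 2 * (\<Sum>a\<in>A i. \<Sum>b\<in>A j. (q i a *\<^sub>R (a - y)) \<bullet> (q j b *\<^sub>R (b - y)))"
      by (simp add: sum.distrib sum_subtractf sum_distrib_left sum_distrib_right algebra_simps)
    also have "\<dots> = e i + e j - 2 * (v i \<bullet> v j)"
    proof -
      have ip: "(\<Sum>a\<in>A i. \<Sum>b\<in>A j. (q i a *\<^sub>R (a - y)) \<bullet> (q j b *\<^sub>R (b - y))) = v i \<bullet> v j"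
        unfolding v_def inner_sum_left by (rule sum.cong[OF refl]) (simp add: inner_sum_right)
      show ?thesis unfolding ip using qs that unfolding e_def
        by (simp add: flip: sum_distrib_right)
    qed
    finally show ?thesis .
  qed
  have Dnn: "D i j \<ge> 0" if "i < N" "j < N" for i j
    unfolding D_def using qnn that by (intro sum_nonneg) auto
  have Dsym: "D i j = D j i" for i j
    unfolding D_def by (subst sum.swap) (simp add: norm_minus_commute mult.commute mult.left_commute)
  have half: "2 * (\<Sum>i<N. \<Sum>j<N. if i < j then T i j else 0) \<le> (\<Sum>i<N. \<Sum>j<N. T i j)"
    by (rule half_sum_le) (use Dnn Dsym lnn in \<open>auto simp: T_def mult.commute\<close>)
  define V where "V = (\<Sum>i<N. lam i *\<^sub>R v i)"
  have full: "(\<Sum>i<N. \<Sum>j<N. T i j) = 2 * (\<Sum>i<N. lam i * e i) - 2 * (V \<bullet> V)"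
  proof -
    have "(\<Sum>i<N. \<Sum>j<N. T i j) = (\<Sum>i<N. \<Sum>j<N. lam i * lam j * e i + lam i * lam j * e j - 2 * ((lam i *\<^sub>R v i) \<bullet> (lam j *\<^sub>R v j)))"
      unfolding T_def by (rule sum.cong[OF refl], rule sum.cong[OF refl]) (simp add: Dexp algebra_simps)
    also have "\<dots> = (\<Sum>i<N. \<Sum>j<N. lam i * lam j * e i) + (\<Sum>i<N. \<Sum>j<N. lam i * lam j * e j)
        - 2 * (\<Sum>i<N. \<Sum>j<N. (lam i *\<^sub>R v i) \<bullet> (lam j *\<^sub>R v j))"
      by (simp add: sum.distrib sum_subtractf sum_distrib_left)
    also have "(\<Sum>i<N. \<Sum>j<N. lam i * lam j * e i) = (\<Sum>i<N. lam i * e i) * (\<Sum>j<N. lam j)"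
      by (simp add: sum_distrib_left sum_distrib_right algebra_simps)
    also have "(\<Sum>i<N. \<Sum>j<N. lam i * lam j * e j) = (\<Sum>i<N. lam i) * (\<Sum>j<N. lam j * e j)"
      by (simp add: sum_product mult.assoc)
    also have "(\<Sum>i<N. \<Sum>j<N. (lam i *\<^sub>R v i) \<bullet> (lam j *\<^sub>R v j)) = V \<bullet> V"
      unfolding V_def inner_sum_left by (rule sum.cong[OF refl]) (simp add: inner_sum_right)
    also have "(\<Sum>i<N. lam i * e i) * (\<Sum>j<N. lam j) + (\<Sum>i<N. lam i) * (\<Sum>j<N. lam j * e j) - 2 * (V \<bullet> V)
        = 2 * (\<Sum>i<N. lam i * e i) - 2 * (V \<bullet> V)" using ls by simp
    finally show ?thesis .
  qed
  have "(\<Sum>i<N. \<Sum>j<N. if i < j then lam i * lam j * (\<Sum>a\<in>A i. \<Sum>b\<in>A j. q i a * q j b * (norm (a - b))\<^sup>2) else 0)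
       = (\<Sum>i<N. \<Sum>j<N. if i < j then T i j else 0)" unfolding T_def D_def by simp
  also have "\<dots> \<le> (\<Sum>i<N. lam i * e i)" using half full inner_ge_zero[of V] by linarith
  also have "\<dots> = (\<Sum>i<N. lam i * (\<Sum>a\<in>A i. q i a * (norm (y - a))\<^sup>2))"
    unfolding e_def by (simp add: norm_minus_commute)
  finally show ?thesis .
qed



lemma sum3: "(\<Sum>t\<in>Y \<times> (A \<times> B). h t) = (\<Sum>y\<in>Y. \<Sum>a\<in>A. \<Sum>b\<in>B. h (y, a, b))"
  unfolding sum.cartesian_product by (rule sum.cong) auto

lemma glue:
  fixes \<nu> \<mu>1 \<mu>2 :: "'a::real_normed_vector \<Rightarrow> real" and \<gamma> \<delta> :: "'a \<times> 'a \<Rightarrow> real"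
  assumes nnn: "\<forall>y. \<nu> y \<ge> 0" and finY: "finite (supp_m \<nu>)"
    and c1: "coupling \<nu> \<mu>1 \<gamma>" and c2: "coupling \<nu> \<mu>2 \<delta>"
    and fin1: "finite (supp_m \<mu>1)" and fin2: "finite (supp_m \<mu>2)"
  shows "W2sq \<mu>1 \<mu>2 \<le> (\<Sum>y\<in>supp_m \<nu>. \<Sum>a\<in>supp_m \<mu>1. \<Sum>b\<in>supp_m \<mu>2.
            \<gamma> (y, a) * \<delta> (y, b) / \<nu> y * (norm (a - b))\<^sup>2)"
proof -
  define Y where "Y = supp_m \<nu>"
  define A where "A = supp_m \<mu>1"
  define B where "B = supp_m \<mu>2"
  define I where "I = Y \<times> (A \<times> B)"
  define c where "c t = \<gamma> (fst t, fst (snd t)) * \<delta> (fst t, snd (snd t)) / \<nu> (fst t)" for t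
  define f where "f t = fst (snd t)" for t :: "'a \<times> 'a \<times> 'a"
  define g where "g t = snd (snd t)" for t :: "'a \<times> 'a \<times> 'a"
  have finI: "finite I" unfolding I_def Y_def A_def B_def using finY fin1 fin2 by simp
  have gnn: "\<gamma> p \<ge> 0" "\<delta> p \<ge> 0" for p using c1 c2 unfolding coupling_def by (metis surj_pair)+
  have cnn: "\<forall>t\<in>I. c t \<ge> 0" unfolding c_def using gnn nnn by simp
  from push_coupling[OF finI cnn, of f g]
  have pc: "coupling (\<lambda>y. \<Sum>t\<in>I. if f t = y then c t else 0) (\<lambda>z. \<Sum>t\<in>I. if g t = z then c t else 0)
      (\<lambda>p. \<Sum>t\<in>I. if (f t, g t) = p then c t else 0)"
    and pcost: "transport_cost (\<lambda>p. \<Sum>t\<in>I. if (f t, g t) = p then c t else 0) = (\<Sum>t\<in>I. c t * (norm (f t - g t))\<^sup>2)"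
    by blast+
  have nuY: "\<nu> y \<noteq> 0" if "y \<in> Y" for y using that unfolding Y_def supp_m_def by simp
  have m1: "(\<lambda>y. \<Sum>t\<in>I. if f t = y then c t else 0) = \<mu>1"
  proof
    fix z
    have "(\<Sum>t\<in>I. if f t = z then c t else 0)
        = (\<Sum>y\<in>Y. \<Sum>a\<in>A. \<Sum>b\<in>B. if a = z then \<gamma> (y, a) * \<delta> (y, b) / \<nu> y else 0)"
      unfolding I_def sum3 f_def c_def by (simp only: fst_conv snd_conv)
    also have "\<dots> = (\<Sum>y\<in>Y. \<Sum>a\<in>A. if a = z then \<gamma> (y, a) * (\<Sum>b\<in>B. \<delta> (y, b)) / \<nu> y else 0)"
      by (intro sum.cong refl) (simp add: sum_distrib_left sum_divide_distrib)
    also have "\<dots> = (\<Sum>y\<in>Y. \<Sum>a\<in>A. if a = z then \<gamma> (y, a) else 0)"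
      using c2 nuY unfolding coupling_def B_def by (intro sum.cong refl) auto
    also have "\<dots> = (\<Sum>y\<in>Y. if z \<in> A then \<gamma> (y, z) else 0)"
      using fin1 unfolding A_def by (simp add: sum.delta')
    also have "\<dots> = \<mu>1 z"
      using c1 unfolding coupling_def Y_def A_def by (cases "\<mu>1 z = 0") (auto simp: supp_m_def)
    finally show "(\<Sum>t\<in>I. if f t = z then c t else 0) = \<mu>1 z" .
  qed
  have m2: "(\<lambda>z. \<Sum>t\<in>I. if g t = z then c t else 0) = \<mu>2"
  proof
    fix z
    have "(\<Sum>t\<in>I. if g t = z then c t else 0)
        = (\<Sum>y\<in>Y. \<Sum>a\<in>A. \<Sum>b\<in>B. if b = z then \<gamma> (y, a) * \<delta> (y, b) / \<nu> y else 0)"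
      unfolding I_def sum3 g_def c_def by (simp only: fst_conv snd_conv)
    also have "\<dots> = (\<Sum>y\<in>Y. \<Sum>b\<in>B. \<Sum>a\<in>A. if b = z then \<gamma> (y, a) * \<delta> (y, b) / \<nu> y else 0)"
      by (rule sum.cong[OF refl], rule sum.swap)
    also have "\<dots> = (\<Sum>y\<in>Y. \<Sum>b\<in>B. if b = z then \<delta> (y, b) * (\<Sum>a\<in>A. \<gamma> (y, a)) / \<nu> y else 0)"
      by (intro sum.cong refl) (simp add: sum_distrib_left sum_distrib_right sum_divide_distrib mult.commute)
    also have "\<dots> = (\<Sum>y\<in>Y. \<Sum>b\<in>B. if b = z then \<delta> (y, b) else 0)"
      using c1 nuY unfolding coupling_def A_def by (intro sum.cong refl) auto
    also have "\<dots> = (\<Sum>y\<in>Y. if z \<in> B then \<delta> (y, z) else 0)"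
      using fin2 unfolding B_def by (simp add: sum.delta')
    also have "\<dots> = \<mu>2 z"
      using c2 unfolding coupling_def Y_def B_def by (cases "\<mu>2 z = 0") (auto simp: supp_m_def)
    finally show "(\<Sum>t\<in>I. if g t = z then c t else 0) = \<mu>2 z" .
  qed
  have "W2sq \<mu>1 \<mu>2 \<le> (\<Sum>t\<in>I. c t * (norm (f t - g t))\<^sup>2)"
    using W2sq_le[OF pc] pcost unfolding m1 m2 by simp
  also have "\<dots> = (\<Sum>y\<in>supp_m \<nu>. \<Sum>a\<in>supp_m \<mu>1. \<Sum>b\<in>supp_m \<mu>2.
            \<gamma> (y, a) * \<delta> (y, b) / \<nu> y * (norm (a - b))\<^sup>2)"
    unfolding I_def sum3 c_def f_def g_def Y_def A_def B_def by simp
  finally show ?thesis .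
qed



lemma sum_Sig2: fixes N :: nat and a :: "nat \<Rightarrow> nat" shows "(\<Sum>t\<in>Sigma {..<N} (\<lambda>i. {..<a i}). h t) = (\<Sum>i<N. \<Sum>k<a i. h (i,k))"
  using sum.Sigma[of "{..<N}" "\<lambda>i. {..<a i}" "\<lambda>i k. h (i,k)"] by (simp add: case_prod_beta)

lemma sum_Sig3: fixes N :: nat and a :: "nat \<Rightarrow> nat" and b :: nat shows "(\<Sum>t\<in>Sigma {..<N} (\<lambda>i. {..<a i} \<times> {..<b}). h t) = (\<Sum>i<N. \<Sum>k<a i. \<Sum>l<b. h (i,k,l))"
proof -
  have "(\<Sum>i<N. \<Sum>k<a i. \<Sum>l<b. h (i,k,l)) = (\<Sum>i<N. \<Sum>p\<in>{..<a i} \<times> {..<b}. h (i,p))"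
    unfolding sum.cartesian_product by (intro sum.cong refl) auto
  also have "\<dots> = (\<Sum>t\<in>Sigma {..<N} (\<lambda>i. {..<a i} \<times> {..<b}). h t)"
    using sum.Sigma[of "{..<N}" "\<lambda>i. {..<a i} \<times> {..<b}" "\<lambda>i p. h (i,p)"] by (simp add: case_prod_beta)
  finally show ?thesis by simp
qed

lemma sym_sum:
  fixes T :: "nat \<Rightarrow> nat \<Rightarrow> real"
  assumes diag: "\<forall>i<N. T i i = 0" and sym: "\<forall>i<N. \<forall>j<N. T i j = T j i"
  shows "(\<Sum>i<N. \<Sum>j<N. T i j) = 2 * (\<Sum>i<N. \<Sum>j<N. if i < j then T i j else 0)"
proof -
  have R: "(\<Sum>i<N. \<Sum>j<N. if j < i then T i j else 0) = (\<Sum>i<N. \<Sum>j<N. if i < j then T i j else 0)"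
  proof -
    have "(\<Sum>i<N. \<Sum>j<N. if j < i then T i j else 0) = (\<Sum>j<N. \<Sum>i<N. if j < i then T i j else 0)"
      by (rule sum.swap)
    also have "\<dots> = (\<Sum>i<N. \<Sum>j<N. if i < j then T i j else 0)"
      by (rule sum.cong[OF refl], rule sum.cong[OF refl]) (use sym in auto)
    finally show ?thesis .
  qed
  have "(\<Sum>i<N. \<Sum>j<N. T i j) = (\<Sum>i<N. \<Sum>j<N. (if i < j then T i j else 0) + (if j < i then T i j else 0))"
    by (rule sum.cong[OF refl], rule sum.cong[OF refl]) (use diag in auto)
  also have "\<dots> = (\<Sum>i<N. \<Sum>j<N. if i < j then T i j else 0) + (\<Sum>i<N. \<Sum>j<N. if j < i then T i j else 0)"
    by (simp add: sum.distrib)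
  finally show ?thesis using R by simp
qed



theorem mainTheorem7:
  fixes N :: nat and lam :: "nat \<Rightarrow> real" and n :: "nat \<Rightarrow> nat"
    and w :: "nat \<Rightarrow> nat \<Rightarrow> real" and x :: "nat \<Rightarrow> nat \<Rightarrow> 'a::euclidean_space"
    and P :: "nat \<Rightarrow> nat \<Rightarrow> nat \<Rightarrow> nat \<Rightarrow> real"
    and m :: "nat \<Rightarrow> nat \<Rightarrow> 'a" and \<nu>t \<nu>h :: "'a \<Rightarrow> real"
  assumes N2: "N \<ge> 2"
    and lam_pos: "\<forall>i<N. 0 < lam i \<and> lam i < 1" and lam_sum: "(\<Sum>i<N. lam i) = 1"
    and w_pos: "\<forall>i<N. \<forall>k<n i. 0 < w i k" and w_sum: "\<forall>i<N. (\<Sum>k<n i. w i k) = 1"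
    and x_dist: "\<forall>i<N. inj_on (x i) {..<n i}"
    and not_all_eq: "\<exists>i<N. \<exists>j<N. dmeas (n i) (w i) (x i) \<noteq> dmeas (n j) (w j) (x j)"
    and P_diag: "\<forall>i<N. \<forall>k<n i. \<forall>l<n i. P i i k l = (if l = k then w i k else 0)"
    and P_coup: "\<forall>i<N. \<forall>j<N. i < j \<longrightarrow>
          (\<forall>k<n i. \<forall>l<n j. P i j k l \<ge> 0)
        \<and> (\<forall>k<n i. (\<Sum>l<n j. P i j k l) = w i k)
        \<and> (\<forall>l<n j. (\<Sum>k<n i. P i j k l) = w j l)"
    and P_opt: "\<forall>i<N. \<forall>j<N. i < j \<longrightarrow>
          (\<Sum>k<n i. \<Sum>l<n j. P i j k l * (norm (x i k - x j l))\<^sup>2)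
            = W2sq (dmeas (n i) (w i) (x i)) (dmeas (n j) (w j) (x j))"
    and P_sym: "\<forall>i<N. \<forall>j<N. j < i \<longrightarrow> (\<forall>k<n i. \<forall>l<n j. P i j k l = P j i l k)"
    and m_def: "\<forall>i<N. \<forall>k<n i.
          m i k = (\<Sum>j<N. lam j *\<^sub>R (\<Sum>l<n j. (P i j k l / w i k) *\<^sub>R x j l))"
    and nut_def: "\<nu>t = (\<lambda>y. \<Sum>i<N. lam i * (\<Sum>k<n i. if m i k = y then w i k else 0))"
    and nuh_prob: "fsprob \<nu>h"
    and nuh_opt: "\<forall>\<nu>. fsprob \<nu> \<longrightarrow> Psi2 N lam n w x \<nu>h \<le> Psi2 N lam n w x \<nu>"
  shows "Psi2 N lam n w x \<nu>t / Psi2 N lam n w x \<nu>h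
    \<le> 2 - (\<Sum>i<N. lam i * (\<Sum>k<n i. w i k * (norm (m i k - x i k))\<^sup>2))
          / (\<Sum>i<N. \<Sum>j<N. if i < j then lam i * lam j *
               W2sq (dmeas (n i) (w i) (x i)) (dmeas (n j) (w j) (x j)) else 0)"
proof -
  define mu where "mu i = dmeas (n i) (w i) (x i)" for i
  define W where "W i j = W2sq (mu i) (mu j)" for i j
  define S where "S = (\<Sum>i<N. \<Sum>j<N. if i < j then lam i * lam j * W i j else 0)"
  define D where "D = (\<Sum>i<N. lam i * (\<Sum>k<n i. w i k * (norm (m i k - x i k))\<^sup>2))"
  define Pt where "Pt = Psi2 N lam n w x \<nu>t"
  define Ph where "Ph = Psi2 N lam n w x \<nu>h"
  have lnn: "\<forall>i<N. lam i \<ge> 0" using lam_pos by auto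
  have Pnn: "P i j k l \<ge> 0" if "i < N" "j < N" "k < n i" "l < n j" for i j k l
  proof -
    consider "i < j" | "i = j" | "j < i" by arith
    thus ?thesis
    proof cases
      case 1 thus ?thesis using P_coup that by blast
    next
      case 2 thus ?thesis using P_diag w_pos that by (auto simp: less_imp_le)
    next
      case 3
      hence "P i j k l = P j i l k" using P_sym that by blast
      thus ?thesis using P_coup that 3 by auto
    qed
  qed
  have rowsum: "(\<Sum>l<n j. P i j k l) = w i k" if "i < N" "j < N" "k < n i" for i j k
  proof -
    consider "i < j" | "i = j" | "j < i" by arith
    thus ?thesis
    proof cases
      case 1 thus ?thesis using P_coup that by blast
    next
      case 2
      hence "(\<Sum>l<n j. P i j k l) = (\<Sum>l<n i. if l = k then w i k else 0)"
        using P_diag that by (intro sum.cong) auto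
      thus ?thesis using that by simp
    next
      case 3
      hence "(\<Sum>l<n j. P i j k l) = (\<Sum>l<n j. P j i l k)" using P_sym that by (intro sum.cong) auto
      thus ?thesis using P_coup that 3 by auto
    qed
  qed
  have colsum: "(\<Sum>k<n i. P i j k l) = w j l" if "i < N" "j < N" "l < n j" for i j l
  proof -
    consider "i < j" | "i = j" | "j < i" by arith
    thus ?thesis
    proof cases
      case 1 thus ?thesis using P_coup that by blast
    next
      case 2
      hence "(\<Sum>k<n i. P i j k l) = (\<Sum>k<n i. if l = k then w i k else 0)"
        using P_diag that by (intro sum.cong) auto
      thus ?thesis using that 2 by simp
    next
      case 3
      hence "(\<Sum>k<n i. P i j k l) = (\<Sum>k<n i. P j i l k)" using P_sym that by (intro sum.cong) auto
      thus ?thesis using P_coup that 3 by auto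
    qed
  qed
  define C where "C i j = (\<Sum>k<n i. \<Sum>l<n j. P i j k l * (norm (x i k - x j l))\<^sup>2)" for i j
  have Cdiag: "C i i = 0" if "i < N" for i
    unfolding C_def using P_diag that by (intro sum.neutral ballI) auto
  have Csym: "C i j = C j i" if "i < N" "j < N" for i j
  proof (cases "i = j")
    case False
    have "C i j = (\<Sum>k<n i. \<Sum>l<n j. P j i l k * (norm (x j l - x i k))\<^sup>2)"
    proof (cases "i < j")
      case True
      show ?thesis unfolding C_def using P_sym that True by (intro sum.cong refl) (auto simp: norm_minus_commute)
    next
      case f2: False
      hence "j < i" using False by arith
      show ?thesis unfolding C_def using P_sym that \<open>j < i\<close> by (intro sum.cong refl) (auto simp: norm_minus_commute)
    qed
    also have "\<dots> = C j i" unfolding C_def by (rule sum.swap)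
    finally show ?thesis .
  qed simp
  have CW: "C i j = W i j" if "i < N" "j < N" "i < j" for i j
    unfolding C_def W_def mu_def using P_opt that by blast
  have Cnn: "C i j \<ge> 0" if "i < N" "j < N" for i j
    unfolding C_def using Pnn that by (intro sum_nonneg) auto
  have S_C: "S = (\<Sum>i<N. \<Sum>j<N. if i < j then lam i * lam j * C i j else 0)"
    unfolding S_def using CW by (intro sum.cong refl) auto
  have S_nn: "S \<ge> 0" unfolding S_C using lnn Cnn by (intro sum_nonneg) auto
  have twoS: "(\<Sum>i<N. \<Sum>j<N. lam i * lam j * C i j) = 2 * S"
    unfolding S_C by (rule sym_sum) (use Cdiag Csym in auto)
  have D_nn: "D \<ge> 0" unfolding D_def by (intro sum_nonneg mult_nonneg_nonneg) (use lnn w_pos in \<open>auto simp: order_less_imp_le\<close>)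
  have part1: "Pt \<le> 2 * S - D" and Pt_nn: "Pt \<ge> 0"
  proof -
    define U where "U j = (\<Sum>i<N. \<Sum>k<n i. \<Sum>l<n j. lam i * P i j k l * (norm (m i k - x j l))\<^sup>2)" for j
    have Wt: "W2sq \<nu>t (mu j) \<le> U j \<and> 0 \<le> W2sq \<nu>t (mu j)" if "j < N" for j
    proof -
      define I where "I = Sigma {..<N} (\<lambda>i. {..<n i} \<times> {..<n j})"
      define c where "c t = lam (fst t) * P (fst t) j (fst (snd t)) (snd (snd t))" for t
      define f where "f t = m (fst t) (fst (snd t))" for t :: "nat \<times> nat \<times> nat"
      define g where "g t = x j (snd (snd t))" for t :: "nat \<times> nat \<times> nat"
      have finI: "finite I" unfolding I_def by auto
      have cnn: "\<forall>t\<in>I. c t \<ge> 0" unfolding I_def c_def using lnn Pnn that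
        by (auto intro!: mult_nonneg_nonneg)
      from push_coupling[OF finI cnn, of f g]
      have pc: "coupling (\<lambda>y. \<Sum>t\<in>I. if f t = y then c t else 0) (\<lambda>z. \<Sum>t\<in>I. if g t = z then c t else 0)
          (\<lambda>p. \<Sum>t\<in>I. if (f t, g t) = p then c t else 0)"
        and pcost: "transport_cost (\<lambda>p. \<Sum>t\<in>I. if (f t, g t) = p then c t else 0) = (\<Sum>t\<in>I. c t * (norm (f t - g t))\<^sup>2)"
        by blast+
      have m1: "(\<lambda>y. \<Sum>t\<in>I. if f t = y then c t else 0) = \<nu>t"
      proof
        fix y
        have "(\<Sum>t\<in>I. if f t = y then c t else 0) = (\<Sum>i<N. \<Sum>k<n i. \<Sum>l<n j. if m i k = y then lam i * P i j k l else 0)"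
          unfolding I_def sum_Sig3 f_def c_def by (simp only: fst_conv snd_conv)
        also have "\<dots> = (\<Sum>i<N. lam i * (\<Sum>k<n i. if m i k = y then w i k else 0))"
        proof (rule sum.cong[OF refl])
          fix i assume i: "i \<in> {..<N}"
          have "(\<Sum>k<n i. \<Sum>l<n j. if m i k = y then lam i * P i j k l else 0) = (\<Sum>k<n i. if m i k = y then lam i * w i k else 0)"
          proof (rule sum.cong[OF refl])
            fix k assume k: "k \<in> {..<n i}"
            show "(\<Sum>l<n j. if m i k = y then lam i * P i j k l else 0) = (if m i k = y then lam i * w i k else 0)"
              using rowsum[of i j k] i k that by (cases "m i k = y") (simp_all add: sum_distrib_left[symmetric])
          qed
          also have "\<dots> = lam i * (\<Sum>k<n i. if m i k = y then w i k else 0)"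
            by (subst sum_distrib_left) (rule sum.cong, auto)
          finally show "(\<Sum>k<n i. \<Sum>l<n j. if m i k = y then lam i * P i j k l else 0) = lam i * (\<Sum>k<n i. if m i k = y then w i k else 0)" .
        qed
        also have "\<dots> = \<nu>t y" unfolding nut_def by simp
        finally show "(\<Sum>t\<in>I. if f t = y then c t else 0) = \<nu>t y" .
      qed
      have m2: "(\<lambda>z. \<Sum>t\<in>I. if g t = z then c t else 0) = mu j"
      proof
        fix z
        have "(\<Sum>t\<in>I. if g t = z then c t else 0) = (\<Sum>i<N. \<Sum>k<n i. \<Sum>l<n j. if x j l = z then lam i * P i j k l else 0)"
          unfolding I_def sum_Sig3 g_def c_def by (simp only: fst_conv snd_conv)
        also have "\<dots> = (\<Sum>i<N. lam i * (\<Sum>l<n j. if x j l = z then w j l else 0))"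
        proof (rule sum.cong[OF refl])
          fix i assume i: "i \<in> {..<N}"
          have "(\<Sum>k<n i. \<Sum>l<n j. if x j l = z then lam i * P i j k l else 0) = (\<Sum>l<n j. \<Sum>k<n i. if x j l = z then lam i * P i j k l else 0)"
            by (rule sum.swap)
          also have "\<dots> = (\<Sum>l<n j. if x j l = z then lam i * w j l else 0)"
          proof (rule sum.cong[OF refl])
            fix l assume l: "l \<in> {..<n j}"
            show "(\<Sum>k<n i. if x j l = z then lam i * P i j k l else 0) = (if x j l = z then lam i * w j l else 0)"
              using colsum[of i j l] i l that by (cases "x j l = z") (simp_all add: sum_distrib_left[symmetric])
          qed
          also have "\<dots> = lam i * (\<Sum>l<n j. if x j l = z then w j l else 0)"
            by (subst sum_distrib_left) (rule sum.cong, auto)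
          finally show "(\<Sum>k<n i. \<Sum>l<n j. if x j l = z then lam i * P i j k l else 0) = lam i * (\<Sum>l<n j. if x j l = z then w j l else 0)" .
        qed
        also have "\<dots> = mu j z" unfolding mu_def dmeas_def using lam_sum by (simp add: sum_distrib_right[symmetric])
        finally show "(\<Sum>t\<in>I. if g t = z then c t else 0) = mu j z" .
      qed
      have costU: "(\<Sum>t\<in>I. c t * (norm (f t - g t))\<^sup>2) = U j"
        unfolding I_def sum_Sig3 c_def f_def g_def U_def by (simp only: fst_conv snd_conv)
      show ?thesis using W2sq_le[OF pc] W2sq_nonneg[OF pc] pcost costU unfolding m1 m2 by simp
    qed
    have Pt_eq: "Pt = (\<Sum>j<N. lam j * W2sq \<nu>t (mu j))" unfolding Pt_def Psi2_def mu_def ..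
    show "Pt \<ge> 0" unfolding Pt_eq using Wt lnn by (intro sum_nonneg mult_nonneg_nonneg) auto
    have "Pt \<le> (\<Sum>j<N. lam j * U j)" unfolding Pt_eq using Wt lnn by (intro sum_mono mult_left_mono) auto
    also have "(\<Sum>j<N. lam j * U j) = 2 * S - D"
    proof -
      define Q where "Q i k = (\<Sum>j<N. \<Sum>l<n j. lam j * P i j k l * (norm (m i k - x j l))\<^sup>2)" for i k
      have swap1: "(\<Sum>j<N. lam j * U j) = (\<Sum>i<N. lam i * (\<Sum>k<n i. Q i k))"
      proof -
        have "(\<Sum>j<N. lam j * U j) = (\<Sum>j<N. \<Sum>i<N. \<Sum>k<n i. \<Sum>l<n j. lam i * (lam j * P i j k l * (norm (m i k - x j l))\<^sup>2))"
          unfolding U_def sum_distrib_left by (intro sum.cong refl) (simp add: algebra_simps)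
        also have "\<dots> = (\<Sum>i<N. \<Sum>j<N. \<Sum>k<n i. \<Sum>l<n j. lam i * (lam j * P i j k l * (norm (m i k - x j l))\<^sup>2))"
          by (rule sum.swap)
        also have "\<dots> = (\<Sum>i<N. \<Sum>k<n i. \<Sum>j<N. \<Sum>l<n j. lam i * (lam j * P i j k l * (norm (m i k - x j l))\<^sup>2))"
          by (rule sum.cong[OF refl], rule sum.swap)
        also have "\<dots> = (\<Sum>i<N. lam i * (\<Sum>k<n i. Q i k))"
          unfolding Q_def by (simp add: sum_distrib_left)
        finally show ?thesis .
      qed
      have Qid: "Q i k = (\<Sum>j<N. \<Sum>l<n j. lam j * P i j k l * (norm (x i k - x j l))\<^sup>2) - w i k * (norm (m i k - x i k))\<^sup>2"
        if i: "i < N" and k: "k < n i" for i k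
      proof -
        define T where "T = Sigma {..<N} (\<lambda>j. {..<n j})"
        define r where "r t = lam (fst t) * P i (fst t) k (snd t)" for t
        define y where "y t = x (fst t) (snd t)" for t
        have finT: "finite T" unfolding T_def by auto
        have rs: "(\<Sum>t\<in>T. r t) = w i k"
        proof -
          have "(\<Sum>t\<in>T. r t) = (\<Sum>j<N. lam j * (\<Sum>l<n j. P i j k l))"
            unfolding T_def sum_Sig2 r_def by (simp add: sum_distrib_left)
          also have "\<dots> = (\<Sum>j<N. lam j * w i k)" using rowsum i k by (intro sum.cong refl) auto
          also have "\<dots> = w i k" using lam_sum by (simp add: sum_distrib_right[symmetric])
          finally show ?thesis .
        qed
        have wne: "w i k \<noteq> 0" using w_pos i k by (metis less_irrefl)
        have rm: "(\<Sum>t\<in>T. r t *\<^sub>R y t) = w i k *\<^sub>R m i k"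
        proof -
          have "w i k *\<^sub>R m i k = (\<Sum>j<N. \<Sum>l<n j. (w i k * (lam j * (P i j k l / w i k))) *\<^sub>R x j l)"
            using m_def i k by (simp add: scaleR_sum_right)
          also have "\<dots> = (\<Sum>j<N. \<Sum>l<n j. (lam j * P i j k l) *\<^sub>R x j l)"
            using wne by (intro sum.cong refl) simp
          also have "\<dots> = (\<Sum>t\<in>T. r t *\<^sub>R y t)" unfolding T_def sum_Sig2 r_def y_def by simp
          finally show ?thesis by simp
        qed
        from var_id[OF finT rs rm, of "x i k"]
        have "(\<Sum>t\<in>T. r t * (norm (m i k - y t))\<^sup>2) = (\<Sum>t\<in>T. r t * (norm (x i k - y t))\<^sup>2) - w i k * (norm (m i k - x i k))\<^sup>2" .
        thus ?thesis unfolding Q_def T_def sum_Sig2 r_def y_def by (simp only: fst_conv snd_conv)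
      qed
      have "(\<Sum>i<N. lam i * (\<Sum>k<n i. Q i k))
          = (\<Sum>i<N. lam i * (\<Sum>k<n i. \<Sum>j<N. \<Sum>l<n j. lam j * P i j k l * (norm (x i k - x j l))\<^sup>2)) - D"
      proof -
        have "(\<Sum>i<N. lam i * (\<Sum>k<n i. Q i k))
            = (\<Sum>i<N. lam i * (\<Sum>k<n i. (\<Sum>j<N. \<Sum>l<n j. lam j * P i j k l * (norm (x i k - x j l))\<^sup>2) - w i k * (norm (m i k - x i k))\<^sup>2))"
          using Qid by (intro sum.cong refl) auto
        thus ?thesis unfolding D_def by (simp add: sum_subtractf right_diff_distrib)
      qed
      also have "(\<Sum>i<N. lam i * (\<Sum>k<n i. \<Sum>j<N. \<Sum>l<n j. lam j * P i j k l * (norm (x i k - x j l))\<^sup>2))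
          = (\<Sum>i<N. \<Sum>j<N. lam i * lam j * C i j)"
      proof (rule sum.cong[OF refl])
        fix i
        have "(\<Sum>k<n i. \<Sum>j<N. \<Sum>l<n j. lam j * P i j k l * (norm (x i k - x j l))\<^sup>2)
            = (\<Sum>j<N. \<Sum>k<n i. \<Sum>l<n j. lam j * P i j k l * (norm (x i k - x j l))\<^sup>2)"
          by (rule sum.swap)
        also have "\<dots> = (\<Sum>j<N. lam j * C i j)"
          unfolding C_def by (simp add: sum_distrib_left mult.assoc)
        finally show "lam i * (\<Sum>k<n i. \<Sum>j<N. \<Sum>l<n j. lam j * P i j k l * (norm (x i k - x j l))\<^sup>2)
            = (\<Sum>j<N. lam i * lam j * C i j)"
          by (simp add: sum_distrib_left mult.assoc)
      qed
      finally show ?thesis using swap1 twoS by simp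
    qed
    finally show "Pt \<le> 2 * S - D" .
  qed
  have part2: "S \<le> Ph"
  proof (rule field_le_epsilon)
    fix e :: real assume e: "0 < e"
    have nuh_nn: "\<forall>y. \<nu>h y \<ge> 0" and finY: "finite (supp_m \<nu>h)" and nuh_sum: "sum \<nu>h (supp_m \<nu>h) = 1"
      using nuh_prob unfolding fsprob_def by auto
    define Y where "Y = supp_m \<nu>h"
    define A where "A i = supp_m (mu i)" for i
    have finA: "finite (A i)" for i
      unfolding A_def mu_def dmeas_def by (rule finite_subset[OF supp_push_sub finite_imageI]) simp
    have nuY: "\<nu>h y \<noteq> 0" if "y \<in> Y" for y using that unfolding Y_def supp_m_def by simp
    have exc: "\<exists>\<pi>. coupling \<nu>h (mu i) \<pi>" if "i < N" for i
    proof -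
      define I where "I = Y \<times> {..<n i}"
      define c where "c t = \<nu>h (fst t) * w i (snd t)" for t
      define f where "f t = fst t" for t :: "'a \<times> nat"
      define g where "g t = x i (snd t)" for t :: "'a \<times> nat"
      have finI: "finite I" unfolding I_def Y_def using finY by simp
      have cnn: "\<forall>t\<in>I. c t \<ge> 0" unfolding I_def c_def using nuh_nn w_pos that
        by (auto intro!: mult_nonneg_nonneg simp: order_less_imp_le)
      have sum2: "(\<Sum>t\<in>I. h t) = (\<Sum>y\<in>Y. \<Sum>k<n i. h (y, k))" for h :: "'a \<times> nat \<Rightarrow> real"
        unfolding I_def sum.cartesian_product by (rule sum.cong) auto
      from push_coupling[OF finI cnn, of f g]
      have pc: "coupling (\<lambda>y. \<Sum>t\<in>I. if f t = y then c t else 0) (\<lambda>z. \<Sum>t\<in>I. if g t = z then c t else 0)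
          (\<lambda>p. \<Sum>t\<in>I. if (f t, g t) = p then c t else 0)" by blast
      have m1: "(\<lambda>y. \<Sum>t\<in>I. if f t = y then c t else 0) = \<nu>h"
      proof
        fix y
        have "(\<Sum>t\<in>I. if f t = y then c t else 0) = (\<Sum>y'\<in>Y. \<Sum>k<n i. if y' = y then \<nu>h y' * w i k else 0)"
          unfolding sum2 f_def c_def by (simp only: fst_conv snd_conv)
        also have "\<dots> = (\<Sum>y'\<in>Y. if y' = y then \<nu>h y' else 0)"
          using w_sum that by (intro sum.cong refl) (simp add: sum_distrib_left[symmetric])
        also have "\<dots> = \<nu>h y" using finY unfolding Y_def by (simp add: sum.delta' supp_m_def)
        finally show "(\<Sum>t\<in>I. if f t = y then c t else 0) = \<nu>h y" .
      qed
      have m2: "(\<lambda>z. \<Sum>t\<in>I. if g t = z then c t else 0) = mu i"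
      proof
        fix z
        have "(\<Sum>t\<in>I. if g t = z then c t else 0) = (\<Sum>y'\<in>Y. \<Sum>k<n i. if x i k = z then \<nu>h y' * w i k else 0)"
          unfolding sum2 g_def c_def by (simp only: fst_conv snd_conv)
        also have "\<dots> = (\<Sum>y'\<in>Y. \<nu>h y' * mu i z)"
          unfolding mu_def dmeas_def by (intro sum.cong refl) (simp add: sum_distrib_left if_distrib cong: if_cong)
        also have "\<dots> = mu i z" using nuh_sum unfolding Y_def by (simp add: sum_distrib_right[symmetric])
        finally show "(\<Sum>t\<in>I. if g t = z then c t else 0) = mu i z" .
      qed
      show ?thesis using pc unfolding m1 m2 by blast
    qed
    have "\<forall>i. \<exists>\<pi>. i < N \<longrightarrow> coupling \<nu>h (mu i) \<pi> \<and> transport_cost \<pi> < W2sq \<nu>h (mu i) + e"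
      using exc W2sq_approx[OF _ e] by metis
    then obtain \<gamma> where \<gamma>: "\<And>i. i < N \<Longrightarrow> coupling \<nu>h (mu i) (\<gamma> i) \<and> transport_cost (\<gamma> i) < W2sq \<nu>h (mu i) + e"
      by metis
    define q where "q i y a = \<gamma> i (y, a) / \<nu>h y" for i y a
    define G where "G i j = (\<Sum>y\<in>Y. \<Sum>a\<in>A i. \<Sum>b\<in>A j. \<gamma> i (y, a) * \<gamma> j (y, b) / \<nu>h y * (norm (a - b))\<^sup>2)" for i j
    define H where "H y i j = (if i < j then lam i * lam j * (\<Sum>a\<in>A i. \<Sum>b\<in>A j. q i y a * q j y b * (norm (a - b))\<^sup>2) else 0)" for y i j
    have gnn: "\<gamma> i p \<ge> 0" if "i < N" for i p using \<gamma>[OF that] unfolding coupling_def by blast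
    have "S \<le> (\<Sum>i<N. \<Sum>j<N. if i < j then lam i * lam j * G i j else 0)"
      unfolding S_def
    proof (intro sum_mono)
      fix i j assume i: "i \<in> {..<N}" and j: "j \<in> {..<N}"
      show "(if i < j then lam i * lam j * W i j else 0) \<le> (if i < j then lam i * lam j * G i j else 0)"
      proof (cases "i < j")
        case True
        have "W i j \<le> G i j" unfolding W_def G_def Y_def A_def
          using glue[OF nuh_nn finY _ _ finA[unfolded A_def] finA[unfolded A_def], where \<gamma>="\<gamma> i" and \<delta>="\<gamma> j"] \<gamma> i j by auto
        thus ?thesis using True lnn i j by (simp add: mult_left_mono)
      qed simp
    qed
    also have "\<dots> = (\<Sum>y\<in>Y. \<nu>h y * (\<Sum>i<N. \<Sum>j<N. H y i j))"
    proof -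
      have "(\<Sum>i<N. \<Sum>j<N. if i < j then lam i * lam j * G i j else 0) = (\<Sum>i<N. \<Sum>j<N. \<Sum>y\<in>Y. \<nu>h y * H y i j)"
      proof (intro sum.cong refl)
        fix i j
        show "(if i < j then lam i * lam j * G i j else 0) = (\<Sum>y\<in>Y. \<nu>h y * H y i j)"
        proof (cases "i < j")
          case True
          have "lam i * lam j * G i j = (\<Sum>y\<in>Y. \<nu>h y * (lam i * lam j * (\<Sum>a\<in>A i. \<Sum>b\<in>A j. q i y a * q j y b * (norm (a - b))\<^sup>2)))"
            unfolding G_def sum_distrib_left
          proof (intro sum.cong refl)
            fix y a b assume y: "y \<in> Y"
            show "lam i * lam j * (\<gamma> i (y, a) * \<gamma> j (y, b) / \<nu>h y * (norm (a - b))\<^sup>2)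
               = \<nu>h y * (lam i * lam j * (q i y a * q j y b * (norm (a - b))\<^sup>2))"
              using nuY[OF y] unfolding q_def by (simp add: field_simps power2_eq_square)
          qed
          thus ?thesis using True unfolding H_def by simp
        qed (simp add: H_def)
      qed
      also have "\<dots> = (\<Sum>i<N. \<Sum>y\<in>Y. \<Sum>j<N. \<nu>h y * H y i j)"
        by (rule sum.cong[OF refl], rule sum.swap)
      also have "\<dots> = (\<Sum>y\<in>Y. \<Sum>i<N. \<Sum>j<N. \<nu>h y * H y i j)"
        by (rule sum.swap)
      also have "\<dots> = (\<Sum>y\<in>Y. \<nu>h y * (\<Sum>i<N. \<Sum>j<N. H y i j))"
        by (simp add: sum_distrib_left)
      finally show ?thesis .
    qed
    also have "\<dots> \<le> (\<Sum>y\<in>Y. \<nu>h y * (\<Sum>i<N. lam i * (\<Sum>a\<in>A i. q i y a * (norm (y - a))\<^sup>2)))"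
    proof (rule sum_mono, rule mult_left_mono)
      fix y assume y: "y \<in> Y"
      have qs: "\<forall>i<N. (\<Sum>a\<in>A i. q i y a) = 1"
      proof (intro allI impI)
        fix i assume i: "i < N"
        have "(\<Sum>a\<in>A i. \<gamma> i (y, a)) = \<nu>h y" using \<gamma>[OF i] unfolding coupling_def A_def by blast
        thus "(\<Sum>a\<in>A i. q i y a) = 1" unfolding q_def using nuY[OF y] by (simp add: sum_divide_distrib[symmetric])
      qed
      have qnn: "\<forall>i<N. \<forall>a\<in>A i. q i y a \<ge> 0" unfolding q_def using gnn nuh_nn by simp
      show "(\<Sum>i<N. \<Sum>j<N. H y i j) \<le> (\<Sum>i<N. lam i * (\<Sum>a\<in>A i. q i y a * (norm (y - a))\<^sup>2))"
        unfolding H_def by (rule pair_bound) (use finA qnn qs lnn lam_sum in auto)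
      show "0 \<le> \<nu>h y" using nuh_nn by blast
    qed
    also have "\<dots> = (\<Sum>i<N. lam i * transport_cost (\<gamma> i))"
    proof -
      have "(\<Sum>y\<in>Y. \<nu>h y * (\<Sum>i<N. lam i * (\<Sum>a\<in>A i. q i y a * (norm (y - a))\<^sup>2)))
          = (\<Sum>y\<in>Y. \<Sum>i<N. lam i * (\<Sum>a\<in>A i. \<gamma> i (y, a) * (norm (y - a))\<^sup>2))"
      proof (intro sum.cong refl)
        fix y assume y: "y \<in> Y"
        show "\<nu>h y * (\<Sum>i<N. lam i * (\<Sum>a\<in>A i. q i y a * (norm (y - a))\<^sup>2))
            = (\<Sum>i<N. lam i * (\<Sum>a\<in>A i. \<gamma> i (y, a) * (norm (y - a))\<^sup>2))"
          unfolding sum_distrib_left q_def using nuY[OF y]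
          by (intro sum.cong refl) (simp add: field_simps)
      qed
      also have "\<dots> = (\<Sum>i<N. lam i * (\<Sum>y\<in>Y. \<Sum>a\<in>A i. \<gamma> i (y, a) * (norm (y - a))\<^sup>2))"
        by (subst sum.swap) (simp add: sum_distrib_left)
      also have "\<dots> = (\<Sum>i<N. lam i * transport_cost (\<gamma> i))"
      proof (intro sum.cong refl)
        fix i assume i: "i \<in> {..<N}"
        have "transport_cost (\<gamma> i) = (\<Sum>y\<in>Y. \<Sum>a\<in>A i. \<gamma> i (y, a) * (norm (y - a))\<^sup>2)"
          unfolding Y_def A_def by (rule cost_rewrite) (use \<gamma> i finY finA[unfolded A_def] in auto)
        thus "lam i * (\<Sum>y\<in>Y. \<Sum>a\<in>A i. \<gamma> i (y, a) * (norm (y - a))\<^sup>2) = lam i * transport_cost (\<gamma> i)" by simp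
      qed
      finally show ?thesis .
    qed
    also have "\<dots> \<le> (\<Sum>i<N. lam i * (W2sq \<nu>h (mu i) + e))"
      using \<gamma> lnn by (intro sum_mono mult_left_mono) (auto intro: less_imp_le)
    also have "\<dots> = Ph + e"
      unfolding Ph_def Psi2_def mu_def using lam_sum by (simp add: distrib_left sum.distrib sum_distrib_right[symmetric])
    finally show "S \<le> Ph + e" .
  qed
  have goal: "Pt / Ph \<le> 2 - D / S"
  proof (cases "S = 0")
    case True
    hence "Pt \<le> 0" using part1 D_nn by simp
    moreover have "Ph \<ge> 0" using part2 True by simp
    ultimately have "Pt / Ph \<le> 0" by (simp add: divide_nonpos_nonneg)
    thus ?thesis using True by simp
  next
    case False
    hence Spos: "S > 0" using S_nn by simp
    hence Phpos: "Ph > 0" using part2 by simp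
    have "Pt / Ph \<le> (2 * S - D) / Ph" using part1 Phpos by (simp add: divide_right_mono)
    also have "\<dots> \<le> (2 * S - D) / S"
      using part1 Pt_nn part2 Spos by (intro divide_left_mono) auto
    also have "\<dots> = 2 - D / S" using Spos by (simp add: field_simps)
    finally show ?thesis .
  qed
  thus ?thesis unfolding Pt_def Ph_def D_def S_def W_def mu_def .
qed

end
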